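(* Let $G$ be a graph on $n\ge 3$ vertices, and let $f:\binom{V(G)}{2}\to\mathbb{Z}_{\ge 0}$ be such that for all distinct $u,v\in V(G)$, there are $f(u,v)$ disjoint super-paths in $G$ connecting $u$ and $v$. (a) Then $e(G)\ge\left\lceil\frac{w(f)}{n-2}\right\rceil$. (b) Suppose that $e(G)\ge 1$ and $e(G)=\left\lceil\frac{w(f)}{n-2}\right\rceil$. Then $\Delta(G)-\delta(G)\le 1$, and one of the following holds: (i) $G$ is regular and $\Delta(G)=\delta(G)\ge 2$; (ii) $G$ has exactly one vertex of degree $\delta(G)$, and $\Delta(G)\ge 3$, $\delta(G)\ge 2$; (iii) $G$ has exactly one vertex of degree $\Delta(G)$, and $\Delta(G)\ge 4$, $\delta(G)\ge 3$. Moreover, \[ e(G)=\left\lceil\frac{w(f)}{n-2}\right\rceil=\left\lceil\frac{w(m_G)}{n-2}\right\rceil=\frac{w(m_G)+s}{n-2}, \] where $s=0$ if $G$ is regular, and $s=\frac{n-1}{2}$ otherwise.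
   Context: All graphs are finite, simple and undirected; $\delta(G)$, $\Delta(G)$ are the minimum and maximum degree. A super-path is a path of length at least two. Paths are called disjoint if they are internally vertex-disjoint. For $f:\binom{V(G)}{2}\to\mathbb{Z}_{\ge 0}$ write $f(u,v)=f(\{u,v\})$ and $w(f)=\sum_{\{u,v\}\in\binom{V(G)}{2}} f(u,v)$. Define $m_G:\binom{V(G)}{2}\to\mathbb{Z}_{\ge0}$ by $m_G(u,v)=\min(\deg_G(u),\deg_G(v))-1$ if $uv\in E(G)$, and $m_G(u,v)=\min(\deg_G(u),\deg_G(v))$ if $uv\notin E(G)$. *)

theory Defs
  imports Complex_Main
begin

definition simple_graph :: "'a set \<Rightarrow> 'a set set \<Rightarrow> bool" where
  "simple_graph V E \<longleftrightarrow> finite V \<and> (\<forall>e\<in>E. e \<subseteq> V \<and> card e = 2)"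

definition adj :: "'a set set \<Rightarrow> 'a \<Rightarrow> 'a \<Rightarrow> bool" where
  "adj E u v \<longleftrightarrow> {u, v} \<in> E"

definition degree :: "'a set set \<Rightarrow> 'a \<Rightarrow> nat" where
  "degree E v = card {e \<in> E. v \<in> e}"

definition min_degree :: "'a set \<Rightarrow> 'a set set \<Rightarrow> nat" where
  "min_degree V E = Min (degree E ` V)"

definition max_degree :: "'a set \<Rightarrow> 'a set set \<Rightarrow> nat" where
  "max_degree V E = Max (degree E ` V)"

definition is_path :: "'a set \<Rightarrow> 'a set set \<Rightarrow> 'a list \<Rightarrow> 'a \<Rightarrow> 'a \<Rightarrow> bool" where
  "is_path V E p u v \<longleftrightarrow> p \<noteq> [] \<and> hd p = u \<and> last p = v \<and> distinct p \<and> set p \<subseteq> V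
     \<and> (\<forall>i. Suc i < length p \<longrightarrow> adj E (p ! i) (p ! Suc i))"

text \<open>Super-path: path of length (number of edges) at least two.\<close>
definition super_path :: "'a set \<Rightarrow> 'a set set \<Rightarrow> 'a list \<Rightarrow> 'a \<Rightarrow> 'a \<Rightarrow> bool" where
  "super_path V E p u v \<longleftrightarrow> is_path V E p u v \<and> length p \<ge> 3"

definition interior :: "'a list \<Rightarrow> 'a set" where
  "interior p = set (butlast (tl p))"

definition has_disjoint_super_paths :: "'a set \<Rightarrow> 'a set set \<Rightarrow> 'a \<Rightarrow> 'a \<Rightarrow> nat \<Rightarrow> bool" where
  "has_disjoint_super_paths V E u v k \<longleftrightarrow>
     (\<exists>P :: nat \<Rightarrow> 'a list. (\<forall>i<k. super_path V E (P i) u v) \<and>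
        (\<forall>i<k. \<forall>j<k. i \<noteq> j \<longrightarrow> interior (P i) \<inter> interior (P j) = {}))"

definition weight :: "'a set \<Rightarrow> ('a set \<Rightarrow> nat) \<Rightarrow> nat" where
  "weight V f = (\<Sum>e\<in>{e. e \<subseteq> V \<and> card e = 2}. f e)"

definition mG :: "'a set set \<Rightarrow> 'a set \<Rightarrow> nat" where
  "mG E e = (let d = Min (degree E ` e) in if e \<in> E then d - 1 else d)"

end

theory Submission
  imports Defs
begin

definition nbr :: "'a set set \<Rightarrow> 'a \<Rightarrow> 'a set" where
  "nbr E u = {y. {u,y} \<in> E}"

lemma edge_form: assumes "simple_graph V E" "e \<in> E"
  shows "\<exists>x y. e = {x,y} \<and> x \<noteq> y \<and> x \<in> V \<and> y \<in> V"
proof -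
  have "e \<subseteq> V" "card e = 2" using assms by (auto simp: simple_graph_def)
  then show ?thesis by (metis card_2_iff insert_subset)
qed

lemma nbr_sub: assumes "simple_graph V E" shows "nbr E u \<subseteq> V - {u}"
proof
  fix y assume "y \<in> nbr E u"
  then have "{u,y} \<in> E" by (simp add: nbr_def)
  then have "{u,y} \<subseteq> V" "card {u,y} = 2" using assms by (auto simp: simple_graph_def)
  then show "y \<in> V - {u}" by (cases "u = y") auto
qed

lemma nbr_sym: "y \<in> nbr E u \<longleftrightarrow> u \<in> nbr E y"
  by (simp add: nbr_def insert_commute)

lemma finite_nbr: assumes "simple_graph V E" shows "finite (nbr E u)"
  using nbr_sub[OF assms] assms by (meson finite_Diff finite_subset simple_graph_def)

lemma degree_nbr: assumes "simple_graph V E" shows "degree E u = card (nbr E u)"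
proof -
  have "{e\<in>E. u\<in>e} = (\<lambda>y. {u,y}) ` nbr E u"
  proof
    show "{e\<in>E. u\<in>e} \<subseteq> (\<lambda>y. {u,y}) ` nbr E u"
    proof
      fix e assume "e \<in> {e\<in>E. u\<in>e}"
      then have e: "e \<in> E" "u \<in> e" by auto
      then obtain x y where "e = {x,y}" "x \<noteq> y" using edge_form[OF assms] by blast
      then show "e \<in> (\<lambda>y. {u,y}) ` nbr E u" using e
        by (auto simp: nbr_def insert_commute)
    qed
  qed (auto simp: nbr_def)
  moreover have "inj_on (\<lambda>y. {u,y}) (nbr E u)"
    using nbr_sub[OF assms] by (auto simp: inj_on_def doubleton_eq_iff)
  ultimately show ?thesis unfolding degree_def by (simp add: card_image)
qed

lemma double_count:
  fixes g :: "'a set \<Rightarrow> 'b::comm_semiring_1"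
  assumes "finite V" "finite F" "\<forall>e\<in>F. e \<subseteq> V \<and> card e = 2"
  shows "(\<Sum>u\<in>V. \<Sum>e\<in>{e\<in>F. u\<in>e}. g e) = 2 * (\<Sum>e\<in>F. g e)"
proof -
  have "(\<Sum>u\<in>V. \<Sum>e\<in>{e\<in>F. u\<in>e}. g e) = (\<Sum>u\<in>V. \<Sum>e\<in>F. if u \<in> e then g e else 0)"
    using assms by (simp add: sum.inter_filter)
  also have "\<dots> = (\<Sum>e\<in>F. \<Sum>u\<in>V. if u \<in> e then g e else 0)" by (rule sum.swap)
  also have "\<dots> = (\<Sum>e\<in>F. of_nat (card (V \<inter> e)) * g e)"
    by (intro sum.cong refl) (simp add: sum.If_cases assms(1) Int_def)
  also have "\<dots> = (\<Sum>e\<in>F. 2 * g e)"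
    using assms(3) by (intro sum.cong refl) (simp add: Int_absorb1)
  finally show ?thesis by (simp add: sum_distrib_left)
qed

lemma pair_reindex:
  fixes g :: "'a set \<Rightarrow> 'b::comm_monoid_add"
  assumes "u \<in> V"
  shows "(\<Sum>v\<in>V-{u}. g {u,v}) = (\<Sum>e\<in>{e\<in>{e. e \<subseteq> V \<and> card e = 2}. u\<in>e}. g e)"
proof -
  have "{e\<in>{e. e \<subseteq> V \<and> card e = 2}. u\<in>e} = (\<lambda>v. {u,v}) ` (V-{u})"
  proof
    show "{e\<in>{e. e \<subseteq> V \<and> card e = 2}. u\<in>e} \<subseteq> (\<lambda>v. {u,v}) ` (V-{u})"
    proof
      fix e assume e: "e \<in> {e\<in>{e. e \<subseteq> V \<and> card e = 2}. u\<in>e}"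
      then obtain x y where "e = {x,y}" "x \<noteq> y" by (auto simp: card_2_iff)
      then show "e \<in> (\<lambda>v. {u,v}) ` (V-{u})" using e
        by (auto simp: insert_commute)
    qed
  qed (use assms in auto)
  moreover have "inj_on (\<lambda>v. {u,v}) (V-{u})"
    by (auto simp: inj_on_def doubleton_eq_iff)
  ultimately show ?thesis by (simp add: sum.reindex)
qed

lemma sp_facts:
  assumes G: "simple_graph V E" and sp: "super_path V E p u v"
  shows "p!1 \<in> interior p" "p!1 \<in> nbr E u" "p!1 \<noteq> v" "degree E (p!1) \<ge> 2"
proof -
  have L: "length p \<ge> 3" "p \<noteq> []" "hd p = u" "last p = v" "distinct p"
    and A: "\<And>i. Suc i < length p \<Longrightarrow> adj E (p ! i) (p ! Suc i)"
    using sp by (auto simp: super_path_def is_path_def)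
  have p0: "p!0 = u" using L by (simp add: hd_conv_nth)
  have pl: "p!(length p - 1) = v" using L by (simp add: last_conv_nth)
  have "butlast (tl p) ! 0 = p!1" using L by (simp add: nth_butlast nth_tl)
  moreover have "length (butlast (tl p)) \<ge> 1" using L by simp
  then have "butlast (tl p) \<noteq> []" by (metis list.size(3) not_one_le_zero)
  ultimately show "p!1 \<in> interior p" unfolding interior_def by (metis nth_mem length_greater_0_conv)
  have "adj E (p!0) (p!1)" using A[of 0] L by simp
  then show "p!1 \<in> nbr E u" using p0 by (simp add: adj_def nbr_def)
  show "p!1 \<noteq> v" using L pl nth_eq_iff_index_eq[of p 1 "length p - 1"] by auto
  have "adj E (p!1) (p!2)" using A[of 1] L by (simp add: numeral_2_eq_2)
  then have "p!2 \<in> nbr E (p!1)" by (simp add: adj_def nbr_def)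
  moreover have "p!0 \<in> nbr E (p!1)" using \<open>adj E (p!0) (p!1)\<close> by (simp add: adj_def nbr_def insert_commute)
  moreover have "p!0 \<noteq> p!2" using L nth_eq_iff_index_eq[of p 0 2] by auto
  ultimately have "card {p!0, p!2} \<le> card (nbr E (p!1))"
    using finite_nbr[OF G] by (intro card_mono) auto
  then show "degree E (p!1) \<ge> 2" using degree_nbr[OF G] \<open>p!0 \<noteq> p!2\<close> by simp
qed

lemma path_bound:
  assumes G: "simple_graph V E" and h: "has_disjoint_super_paths V E u v k"
  shows "k \<le> card (nbr E u \<inter> {y. degree E y \<ge> 2} - {v})"
proof -
  obtain P where P1: "\<forall>i<k. super_path V E (P i) u v"
    and P2: "\<forall>i<k. \<forall>j<k. i \<noteq> j \<longrightarrow> interior (P i) \<inter> interior (P j) = {}"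
    using h unfolding has_disjoint_super_paths_def by blast
  have "inj_on (\<lambda>i. P i ! 1) {..<k}"
  proof (rule inj_onI)
    fix i j assume "i \<in> {..<k}" "j \<in> {..<k}" "P i ! 1 = P j ! 1"
    then show "i = j" using P2 sp_facts(1)[OF G] P1 by (metis disjoint_iff lessThan_iff)
  qed
  moreover have "(\<lambda>i. P i ! 1) ` {..<k} \<subseteq> nbr E u \<inter> {y. degree E y \<ge> 2} - {v}"
  proof
    fix y assume "y \<in> (\<lambda>i. P i ! 1) ` {..<k}"
    then obtain i where i: "i < k" "y = P i ! 1" by auto
    then have "super_path V E (P i) u v" using P1 by auto
    then show "y \<in> nbr E u \<inter> {y. degree E y \<ge> 2} - {v}" using sp_facts[OF G] i by blast
  qed
  moreover have "finite (nbr E u \<inter> {y. degree E y \<ge> 2} - {v})" using finite_nbr[OF G] by auto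
  ultimately show ?thesis using card_inj_on_le by fastforce
qed

lemma sepcount:
  fixes d :: "'a \<Rightarrow> nat"
  assumes "finite V" "A \<subseteq> V" "\<forall>a\<in>A. \<forall>b\<in>V-A. d a \<noteq> d b"
  shows "2 * card A * card (V - A) \<le> (\<Sum>u\<in>V. card {v\<in>V. d v \<noteq> d u})"
proof -
  have fA: "finite A" using assms finite_subset by blast
  have "(\<Sum>u\<in>V. card {v\<in>V. d v \<noteq> d u}) = (\<Sum>u\<in>A. card {v\<in>V. d v \<noteq> d u}) + (\<Sum>u\<in>V-A. card {v\<in>V. d v \<noteq> d u})"
    using sum.subset_diff[OF assms(2) assms(1), of "\<lambda>u. card {v\<in>V. d v \<noteq> d u}"] by simp
  moreover have "(\<Sum>u\<in>A. card {v\<in>V. d v \<noteq> d u}) \<ge> (\<Sum>u\<in>A. card (V - A))"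
  proof (rule sum_mono)
    fix u assume "u \<in> A"
    have "V - A \<subseteq> {v\<in>V. d v \<noteq> d u}"
    proof
      fix v assume v: "v \<in> V - A"
      with \<open>u \<in> A\<close> assms(3) have "d u \<noteq> d v" by blast
      then show "v \<in> {v\<in>V. d v \<noteq> d u}" using v by auto
    qed
    then show "card (V - A) \<le> card {v\<in>V. d v \<noteq> d u}" using assms by (intro card_mono) auto
  qed
  moreover have "(\<Sum>u\<in>V-A. card {v\<in>V. d v \<noteq> d u}) \<ge> (\<Sum>u\<in>V-A. card A)"
  proof (rule sum_mono)
    fix u assume "u \<in> V - A"
    have "A \<subseteq> {v\<in>V. d v \<noteq> d u}"
    proof
      fix v assume v: "v \<in> A"
      with \<open>u \<in> V - A\<close> assms(3) have "d v \<noteq> d u" by blast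
      then show "v \<in> {v\<in>V. d v \<noteq> d u}" using v assms(2) by auto
    qed
    then show "card A \<le> card {v\<in>V. d v \<noteq> d u}" using assms by (intro card_mono) auto
  qed
  moreover have "2 * card A * card (V - A) = card A * card (V - A) + card (V - A) * card A" by simp
  moreover have "(\<Sum>u\<in>A. card (V - A)) = card A * card (V - A)" by simp
  moreover have "(\<Sum>u\<in>V-A. card A) = card (V - A) * card A" by simp
  ultimately show ?thesis by linarith
qed

lemma kbound:
  fixes k n :: nat
  assumes "1 \<le> k" "k < n" "k * (n - k) < 2 * (n - 2)"
  shows "k = 1 \<or> k = n - 1"
proof (rule ccontr)
  assume "\<not> ?thesis"
  then have "k \<ge> 2" "n - k \<ge> 2" using assms by auto
  define a where "a = k - 2"
  define b where "b = n - k - 2"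
  have "k = a + 2" "n - k = b + 2" using \<open>k \<ge> 2\<close> \<open>n - k \<ge> 2\<close> by (auto simp: a_def b_def)
  then have "n = a + b + 4" "k * (n - k) = (a+2)*(b+2)" using assms by auto
  moreover have "(a+2)*(b+2) = a*b + 2*a + 2*b + 4" by (simp add: distrib_left distrib_right)
  ultimately show False using assms(3) by linarith
qed

lemma config_D:
  fixes d :: "'a \<Rightarrow> nat"
  assumes fin: "finite V" and c: "c \<in> V" and oth: "\<forall>v\<in>V-{c}. d v = d0"
  shows "(\<Sum>u\<in>V. \<Sum>v\<in>V. \<bar>real (d u) - real (d v)\<bar>) = 2 * (real (card V) - 1) * \<bar>real (d c) - real d0\<bar>"
proof -
  define t where "t = \<bar>real (d c) - real d0\<bar>"
  define m where "m = real (card V) - 1"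
  have cpos: "card V \<ge> 1" using fin c by (auto simp: card_gt_0_iff Suc_le_eq)
  have cm: "real (card (V - {c})) = m" using cpos c fin unfolding m_def by (simp add: of_nat_diff)
  have R: "(\<Sum>v\<in>V. \<bar>real (d u) - real (d v)\<bar>) = \<bar>real (d u) - real (d c)\<bar> + m * \<bar>real (d u) - real d0\<bar>" for u
  proof -
    have "(\<Sum>v\<in>V. \<bar>real (d u) - real (d v)\<bar>) = \<bar>real (d u) - real (d c)\<bar> + (\<Sum>v\<in>V-{c}. \<bar>real (d u) - real (d v)\<bar>)"
      by (rule sum.remove[OF fin c])
    also have "(\<Sum>v\<in>V-{c}. \<bar>real (d u) - real (d v)\<bar>) = (\<Sum>v\<in>V-{c}. \<bar>real (d u) - real d0\<bar>)"
      using oth by (intro sum.cong refl) auto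
    also have "\<dots> = m * \<bar>real (d u) - real d0\<bar>" by (simp only: sum_constant cm)
    finally show ?thesis .
  qed
  have Rc: "(\<Sum>v\<in>V. \<bar>real (d c) - real (d v)\<bar>) = m * t" using R[of c] by (simp add: t_def)
  have Ro: "(\<Sum>v\<in>V. \<bar>real (d u) - real (d v)\<bar>) = t" if "u \<in> V - {c}" for u
  proof -
    have "d u = d0" using that oth by auto
    then show ?thesis using R[of u] by (simp add: t_def abs_minus_commute)
  qed
  have "(\<Sum>u\<in>V. \<Sum>v\<in>V. \<bar>real (d u) - real (d v)\<bar>) = (\<Sum>v\<in>V. \<bar>real (d c) - real (d v)\<bar>) + (\<Sum>u\<in>V-{c}. \<Sum>v\<in>V. \<bar>real (d u) - real (d v)\<bar>)"
    by (rule sum.remove[OF fin c])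
  also have "(\<Sum>u\<in>V-{c}. \<Sum>v\<in>V. \<bar>real (d u) - real (d v)\<bar>) = (\<Sum>u\<in>V-{c}. t)"
    using Ro by (rule sum.cong[OF refl])
  also have "\<dots> = m * t" by (simp only: sum_constant cm)
  finally show ?thesis using Rc by (simp add: m_def t_def)
qed

lemma lin_aux: "(x::real) < w \<Longrightarrow> x = P - m \<Longrightarrow> w \<le> wm \<Longrightarrow> wm = P - D / 4 \<Longrightarrow> D < 4 * m"
  by linarith

lemma lin2: "(X::real) \<le> D \<Longrightarrow> X = 4 * N - 6 \<Longrightarrow> D < 4 * (N - 2) \<Longrightarrow> False"
  by (simp add: algebra_simps)

lemma ceil_aux: "0 \<le> (q::real) \<Longrightarrow> q < 1 \<Longrightarrow> \<lceil>real (m::nat) - q\<rceil> = int m"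
  by (simp add: ceiling_eq_iff)

theorem lemma2p11:
  fixes V :: "'a set" and E :: "'a set set" and f :: "'a set \<Rightarrow> nat"
  assumes G: "simple_graph V E"
    and n: "card V \<ge> 3"
    and paths: "\<And>u v. u \<in> V \<Longrightarrow> v \<in> V \<Longrightarrow> u \<noteq> v \<Longrightarrow>
                  has_disjoint_super_paths V E u v (f {u, v})"
  shows "int (card E) \<ge> \<lceil>real (weight V f) / real (card V - 2)\<rceil>
    \<and> (card E \<ge> 1 \<longrightarrow> int (card E) = \<lceil>real (weight V f) / real (card V - 2)\<rceil> \<longrightarrow>
         max_degree V E - min_degree V E \<le> 1
         \<and> ((max_degree V E = min_degree V E \<and> min_degree V E \<ge> 2)
            \<or> (card {v \<in> V. degree E v = min_degree V E} = 1 \<and> max_degree V E \<ge> 3 \<and> min_degree V E \<ge> 2)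
            \<or> (card {v \<in> V. degree E v = max_degree V E} = 1 \<and> max_degree V E \<ge> 4 \<and> min_degree V E \<ge> 3))
         \<and> int (card E) = \<lceil>real (weight V (mG E)) / real (card V - 2)\<rceil>
         \<and> real (card E) = (real (weight V (mG E))
              + (if max_degree V E = min_degree V E then 0 else (real (card V) - 1) / 2))
              / real (card V - 2))"
proof -
  define d where "d = degree E"
  define H where "H = {y. degree E y \<ge> 2}"
  define P2 where "P2 = {e. e \<subseteq> V \<and> card e = 2}"
  have finV: "finite V" using G by (simp add: simple_graph_def)
  have finE: "finite E"
  proof -
    have "E \<subseteq> Pow V" using G by (auto simp: simple_graph_def)
    then show ?thesis using finV finite_subset by blast
  qed
  have finP2: "finite P2" using finV by (simp add: P2_def)
  have nr: "real (card V - 2) = real (card V) - 2" using n by (simp add: of_nat_diff)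
  have npos: "real (card V) - 2 > 0" using n by simp
  have hs: "(\<Sum>u\<in>V. d u) = 2 * card E"
    using double_count[OF finV finE, of "\<lambda>_. 1::nat"] G
    unfolding d_def degree_def simple_graph_def by simp
  have hsr: "(\<Sum>u\<in>V. real (d u)) = 2 * real (card E)"
    using arg_cong[OF hs, of real] by simp
  have wconv: "2 * real (weight V h) = (\<Sum>u\<in>V. \<Sum>v\<in>V-{u}. real (h {u,v}))" for h :: "'a set \<Rightarrow> nat"
  proof -
    have "(\<Sum>u\<in>V. \<Sum>v\<in>V-{u}. real (h {u,v})) = (\<Sum>u\<in>V. \<Sum>e\<in>{e\<in>P2. u\<in>e}. real (h e))"
      unfolding P2_def by (intro sum.cong refl pair_reindex)
    also have "\<dots> = 2 * (\<Sum>e\<in>P2. real (h e))"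
      by (rule double_count[OF finV finP2]) (auto simp: P2_def)
    finally show ?thesis by (simp add: weight_def P2_def)
  qed
  have fb: "f {u,v} \<le> card (nbr E u \<inter> H - {v}) \<and> f {u,v} \<le> card (nbr E v \<inter> H - {u})"
    if "u \<in> V" "v \<in> V" "u \<noteq> v" for u v
    using path_bound[OF G paths[of u v]] path_bound[OF G paths[of v u]] that
    by (simp add: H_def insert_commute)
  have nbrE: "v \<in> nbr E u \<longleftrightarrow> {u,v} \<in> E" for u v by (simp add: nbr_def)
  have dn: "d u = card (nbr E u)" for u using degree_nbr[OF G] by (simp add: d_def)
  have mGr: "real (mG E {u,v}) = min (real (d u)) (real (d v)) - (if v \<in> nbr E u then 1 else 0)"
    if "u \<in> V" "v \<in> V" "u \<noteq> v" for u v
  proof (cases "v \<in> nbr E u")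
    case True
    then have "u \<in> nbr E v" using nbr_sym[of v E u] by simp
    have "card (nbr E v) > 0" "card (nbr E u) > 0"
      using True \<open>u \<in> nbr E v\<close> finite_nbr[OF G] by (auto simp: card_gt_0_iff)
    then have "d u \<ge> 1" "d v \<ge> 1" using dn by auto
    then show ?thesis using True by (simp add: mG_def d_def nbrE of_nat_diff min_def)
  next
    case False
    then show ?thesis by (simp add: mG_def d_def nbrE min_def)
  qed
  have fm: "f {u,v} \<le> mG E {u,v}" if "u \<in> V" "v \<in> V" "u \<noteq> v" for u v
  proof -
    have "card (nbr E u \<inter> H - {v}) \<le> card (nbr E u - {v})"
      using finite_nbr[OF G] by (intro card_mono) auto
    moreover have "card (nbr E v \<inter> H - {u}) \<le> card (nbr E v - {u})"
      using finite_nbr[OF G] by (intro card_mono) auto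
    moreover have "card (nbr E u - {v}) = d u - (if v \<in> nbr E u then 1 else 0)"
      using dn by (simp add: card_Diff_singleton_if)
    moreover have "card (nbr E v - {u}) = d v - (if v \<in> nbr E u then 1 else 0)"
      using dn nbr_sym[of u E v] by (simp add: card_Diff_singleton_if)
    ultimately have "f {u,v} \<le> min (d u) (d v) - (if v \<in> nbr E u then 1 else 0)"
      using fb[OF that] by auto
    then show ?thesis by (simp add: mG_def d_def nbrE min_def split: if_splits)
  qed
  have wle: "weight V f \<le> weight V (mG E)"
    unfolding weight_def
  proof (rule sum_mono)
    fix e assume "e \<in> {e. e \<subseteq> V \<and> card e = 2}"
    then obtain u v where "e = {u,v}" "u \<noteq> v" "u \<in> V" "v \<in> V" by (auto simp: card_2_iff)
    then show "f e \<le> mG E e" using fm by simp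
  qed
  define R where "R u = (\<Sum>v\<in>V. \<bar>real (d u) - real (d v)\<bar>)" for u
  define D where "D = (\<Sum>u\<in>V. R u)"
  have per: "(\<Sum>v\<in>V-{u}. real (mG E {u,v})) = real (card V) * real (d u) / 2 + real (card E) - R u / 2 - 2 * real (d u)"
    if "u \<in> V" for u
  proof -
    have "(\<Sum>v\<in>V-{u}. real (mG E {u,v})) = (\<Sum>v\<in>V-{u}. min (real (d u)) (real (d v)) - (if v \<in> nbr E u then 1 else 0))"
      using mGr that by (intro sum.cong refl) auto
    also have "\<dots> = (\<Sum>v\<in>V-{u}. min (real (d u)) (real (d v))) - (\<Sum>v\<in>V-{u}. (if v \<in> nbr E u then 1 else 0))"
      by (simp add: sum_subtractf)
    also have "(\<Sum>v\<in>V-{u}. (if v \<in> nbr E u then 1 else 0::real)) = real (d u)"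
    proof -
      have "(\<Sum>v\<in>V-{u}. (if v \<in> nbr E u then 1 else 0::real)) = real (card ((V-{u}) \<inter> nbr E u))"
        using finV by (simp add: sum.If_cases Int_def)
      also have "(V-{u}) \<inter> nbr E u = nbr E u" using nbr_sub[OF G] by blast
      finally show ?thesis using dn by simp
    qed
    also have "(\<Sum>v\<in>V-{u}. min (real (d u)) (real (d v))) = (\<Sum>v\<in>V. min (real (d u)) (real (d v))) - real (d u)"
      using finV that by (simp add: sum_diff1)
    also have "(\<Sum>v\<in>V. min (real (d u)) (real (d v))) = (\<Sum>v\<in>V. real (d u) / 2 + real (d v) / 2 - \<bar>real (d u) - real (d v)\<bar> / 2)"
      by (intro sum.cong refl) (auto simp: min_def abs_if field_simps)
    also have "\<dots> = real (card V) * real (d u) / 2 + (\<Sum>v\<in>V. real (d v)) / 2 - R u / 2"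
      by (simp add: sum_subtractf sum.distrib sum_divide_distrib R_def)
    finally show ?thesis using hsr by simp
  qed
  have key: "4 * real (weight V (mG E)) = 4 * (real (card V) - 2) * real (card E) - D"
  proof -
    have "2 * real (weight V (mG E)) = (\<Sum>u\<in>V. real (card V) * real (d u) / 2 + real (card E) - R u / 2 - 2 * real (d u))"
      using wconv per by simp
    also have "\<dots> = real (card V) * (\<Sum>u\<in>V. real (d u)) / 2 + real (card V) * real (card E) - D / 2 - 2 * (\<Sum>u\<in>V. real (d u))"
      by (simp add: sum_subtractf sum.distrib sum_divide_distrib sum_distrib_left D_def)
    finally show ?thesis using hsr by (simp add: algebra_simps)
  qed

  have D0: "D \<ge> 0" unfolding D_def R_def by (intro sum_nonneg) auto
  have wf_le: "real (weight V f) \<le> real (weight V (mG E))" using wle by simp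
  have wmG: "real (weight V (mG E)) = (real (card V) - 2) * real (card E) - D / 4"
  proof -
    have "4 * real (card V) - 8 = 4 * (real (card V) - 2)" by simp
    then have "4 * (real (card V) - 2) * real (card E) = 4 * ((real (card V) - 2) * real (card E))" by simp
    then show ?thesis using key by linarith
  qed
  have partA: "int (card E) \<ge> \<lceil>real (weight V f) / real (card V - 2)\<rceil>"
  proof -
    have "real (weight V f) \<le> real (card E) * (real (card V) - 2)"
      using wf_le wmG D0 by (simp add: algebra_simps)
    then have "real (weight V f) / real (card V - 2) \<le> real (card E)"
      using npos nr by (simp add: divide_le_eq)
    then show ?thesis by (simp add: ceiling_le_iff)
  qed
  have finQ: "finite {v\<in>V. d v \<noteq> d u}" for u using finV by simp
  have DQ: "real (\<Sum>u\<in>V. card {v\<in>V. d v \<noteq> d u}) \<le> D"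
  proof -
    have "real (card {v\<in>V. d v \<noteq> d u}) \<le> R u" for u
    proof -
      have "real (card {v\<in>V. d v \<noteq> d u}) = (\<Sum>v\<in>{v\<in>V. d v \<noteq> d u}. 1)" by simp
      also have "\<dots> = (\<Sum>v\<in>V. if d v \<noteq> d u then 1 else 0)" by (rule sum.inter_filter[OF finV])
      also have "\<dots> \<le> R u" unfolding R_def by (intro sum_mono) auto
      finally show ?thesis .
    qed
    then show ?thesis unfolding D_def by (simp add: sum_mono)
  qed
  define dl where "dl = min_degree V E"
  define dh where "dh = max_degree V E"
  have Vne: "V \<noteq> {}" using n by auto
  have dl_le: "dl \<le> d v" if "v \<in> V" for v
    unfolding dl_def min_degree_def d_def using finV that by simp
  have dh_ge: "d v \<le> dh" if "v \<in> V" for v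
    unfolding dh_def max_degree_def d_def using finV that by simp
  have "Min (degree E ` V) \<in> degree E ` V" using finV Vne by (intro Min_in) auto
  then obtain a0 where a0: "a0 \<in> V" "d a0 = dl"
    unfolding dl_def min_degree_def d_def by auto
  have "Max (degree E ` V) \<in> degree E ` V" using finV Vne by (intro Max_in) auto
  then obtain b0 where b0: "b0 \<in> V" "d b0 = dh"
    unfolding dh_def max_degree_def d_def by auto
  have sumd: "(\<Sum>u\<in>V. d u) = d c + (card V - 1) * d0" if "c \<in> V" "\<forall>v\<in>V-{c}. d v = d0" for c d0
  proof -
    have "(\<Sum>u\<in>V. d u) = d c + (\<Sum>u\<in>V-{c}. d u)" by (rule sum.remove[OF finV that(1)])
    also have "(\<Sum>u\<in>V-{c}. d u) = (\<Sum>u\<in>V-{c}. d0)" using that(2) by (intro sum.cong) auto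
    also have "\<dots> = (card V - 1) * d0" using that(1) finV by simp
    finally show ?thesis .
  qed
  have partB: "max_degree V E - min_degree V E \<le> 1
         \<and> ((max_degree V E = min_degree V E \<and> min_degree V E \<ge> 2)
            \<or> (card {v \<in> V. degree E v = min_degree V E} = 1 \<and> max_degree V E \<ge> 3 \<and> min_degree V E \<ge> 2)
            \<or> (card {v \<in> V. degree E v = max_degree V E} = 1 \<and> max_degree V E \<ge> 4 \<and> min_degree V E \<ge> 3))
         \<and> int (card E) = \<lceil>real (weight V (mG E)) / real (card V - 2)\<rceil>
         \<and> real (card E) = (real (weight V (mG E))
              + (if max_degree V E = min_degree V E then 0 else (real (card V) - 1) / 2))
              / real (card V - 2)"
    if e1: "card E \<ge> 1" and eq: "int (card E) = \<lceil>real (weight V f) / real (card V - 2)\<rceil>"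
  proof -
    have "real_of_int \<lceil>real (weight V f) / real (card V - 2)\<rceil> - 1 < real (weight V f) / real (card V - 2)"
      using ceiling_correct by blast
    then have "real (card E) - 1 < real (weight V f) / real (card V - 2)"
      by (simp add: eq[symmetric])
    then have lt: "(real (card E) - 1) * (real (card V) - 2) < real (weight V f)"
      using npos nr by (simp add: pos_less_divide_eq)
    have ee: "(real (card E) - 1) * (real (card V) - 2) = (real (card V) - 2) * real (card E) - (real (card V) - 2)"
      by (simp add: algebra_simps)
    have Dlt: "D < 4 * (real (card V) - 2)" by (rule lin_aux[OF lt ee wf_le wmG])
    have Dlt2: "D < 4 * real (card V) - 8" using Dlt by simp
    have lt0: "0 \<le> (real (card E) - 1) * (real (card V) - 2)" using e1 npos by simp
    have small: False if "\<forall>v\<in>V. d v \<le> 1"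
    proof -
      have "weight V f = 0" unfolding weight_def
      proof (rule sum.neutral, rule ballI)
        fix e assume "e \<in> {e. e \<subseteq> V \<and> card e = 2}"
        then obtain u v where uv: "e = {u,v}" "u \<noteq> v" "u \<in> V" "v \<in> V" by (auto simp: card_2_iff)
        have "nbr E u \<inter> H = {}"
        proof -
          have "y \<notin> H" if "y \<in> nbr E u" for y
          proof -
            have "y \<in> V" using that nbr_sub[OF G] by blast
            then show ?thesis using \<open>\<forall>v\<in>V. d v \<le> 1\<close> by (auto simp: H_def d_def)
          qed
          then show ?thesis by blast
        qed
        then show "f e = 0" using fb[OF uv(3,4,2)] uv(1) by simp
      qed
      then show False using lt lt0 by simp
    qed
    show ?thesis
    proof (cases "dh = dl")
      case True
      have allc: "d v = dl" if "v \<in> V" for v using dl_le dh_ge that True by (metis le_antisym)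
      have "D = 0" unfolding D_def R_def using allc by (simp add: sum.neutral)
      have "dl \<noteq> 0"
      proof
        assume "dl = 0"
        then have "(\<Sum>u\<in>V. d u) = 0" using allc by simp
        then show False using hs e1 by simp
      qed
      moreover have "dl \<noteq> 1"
      proof
        assume "dl = 1"
        then have "\<forall>v\<in>V. d v \<le> 1" using allc by simp
        then show False by (rule small)
      qed
      ultimately have "dl \<ge> 2" by simp
      moreover have "real (weight V (mG E)) / real (card V - 2) = real (card E)"
        using wmG \<open>D = 0\<close> npos nr by simp
      ultimately show ?thesis using True unfolding dl_def dh_def by simp
    next
      case False
      have "dl \<le> dh" using dl_le dh_ge a0 by (meson le_trans)
      then have dlh: "dl < dh" using False by simp
      define A where "A = {v\<in>V. d v = dl}"
      define B where "B = {v\<in>V. d v = dh}"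
      have AV: "A \<subseteq> V" "B \<subseteq> V" unfolding A_def B_def by auto
      have finA: "finite A" "finite B" using AV finV finite_subset by auto
      have a0A: "a0 \<in> A" "a0 \<notin> B" "b0 \<in> B" "b0 \<notin> A" using a0 b0 dlh by (auto simp: A_def B_def)
      have QD: "2 * card S * card (V - S) < 4 * (card V - 2)"
        if "S \<subseteq> V" "\<forall>x\<in>S. \<forall>y\<in>V-S. d x \<noteq> d y" for S
      proof -
        have "real (2 * card S * card (V - S)) \<le> real (\<Sum>u\<in>V. card {v\<in>V. d v \<noteq> d u})"
          using sepcount[OF finV that] by linarith
        also have "\<dots> \<le> D" by (rule DQ)
        also have "\<dots> < 4 * (real (card V) - 2)" by (rule Dlt)
        also have "\<dots> = real (4 * (card V - 2))" using nr by simp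
        finally show ?thesis by linarith
      qed
      have kk: "card S = 1 \<or> card S = card V - 1"
        if "S \<subseteq> V" "\<forall>x\<in>S. \<forall>y\<in>V-S. d x \<noteq> d y" "x1 \<in> S" "x2 \<in> V - S" for S x1 x2
      proof -
        have fS: "finite S" using that(1) finV finite_subset by auto
        have c1: "card (V - S) = card V - card S" using that(1) fS by (simp add: card_Diff_subset)
        have "1 \<le> card S" using that(3) fS by (auto simp: Suc_le_eq card_gt_0_iff)
        moreover have "card S < card V" using that(1,4) finV by (intro psubset_card_mono) auto
        moreover have "card S * (card V - card S) < 2 * (card V - 2)" using QD[OF that(1,2)] c1 by simp
        ultimately show ?thesis using kbound by blast
      qed
      have sepA: "\<forall>x\<in>A. \<forall>y\<in>V-A. d x \<noteq> d y" by (auto simp: A_def)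
      have sepB: "\<forall>x\<in>B. \<forall>y\<in>V-B. d x \<noteq> d y" by (auto simp: B_def)
      have "b0 \<in> V - A" "a0 \<in> V - B" using a0A a0 b0 by auto
      then have kA: "card A = 1 \<or> card A = card V - 1" and kB: "card B = 1 \<or> card B = card V - 1"
        using kk[OF AV(1) sepA a0A(1)] kk[OF AV(2) sepB a0A(3)] by auto
      have conf: "\<exists>c\<in>V. (d c = dl \<and> (\<forall>v\<in>V-{c}. d v = dh)) \<or> (d c = dh \<and> (\<forall>v\<in>V-{c}. d v = dl))"
      proof -
        have cV: "card V \<ge> 3" by (rule n)
        consider "card A = card V - 1" | "card B = card V - 1" | "card A = 1" "card B = 1" using kA kB by blast
        then show ?thesis
        proof cases
          case 1
          then have "card (V - A) = 1" using AV finA finV n by (simp add: card_Diff_subset)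
          then obtain c where c: "V - A = {c}" by (auto simp: card_Suc_eq)
          then have "b0 = c" using a0A b0 by blast
          moreover have "\<forall>v\<in>V-{c}. d v = dl" using c by (auto simp: A_def)
          ultimately show ?thesis using b0 by blast
        next
          case 2
          then have "card (V - B) = 1" using AV finA finV n by (simp add: card_Diff_subset)
          then obtain c where c: "V - B = {c}" by (auto simp: card_Suc_eq)
          then have "a0 = c" using a0A a0 by blast
          moreover have "\<forall>v\<in>V-{c}. d v = dh" using c by (auto simp: B_def)
          ultimately show ?thesis using a0 by blast
        next
          case 3
          then have Aa: "A = {a0}" and Bb: "B = {b0}" using a0A by (auto simp: card_1_singleton_iff)
          have ab: "a0 \<noteq> b0" using a0A by auto
          have Qa: "card {v\<in>V. d v \<noteq> d a0} = card V - 1"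
          proof -
            have "{v\<in>V. d v \<noteq> d a0} = V - A" using a0 by (auto simp: A_def)
            then show ?thesis using Aa a0 finV by simp
          qed
          have Qb: "card {v\<in>V. d v \<noteq> d b0} = card V - 1"
          proof -
            have "{v\<in>V. d v \<noteq> d b0} = V - B" using b0 by (auto simp: B_def)
            then show ?thesis using Bb b0 finV by simp
          qed
          have Qc: "2 \<le> card {v\<in>V. d v \<noteq> d u}" if "u \<in> V - {a0,b0}" for u
          proof -
            have "u \<notin> A" "u \<notin> B" using that Aa Bb by auto
            then have "d u \<noteq> dl" "d u \<noteq> dh" using that by (auto simp: A_def B_def)
            then have "{a0,b0} \<subseteq> {v\<in>V. d v \<noteq> d u}" using a0 b0 by auto
            then have "card {a0,b0} \<le> card {v\<in>V. d v \<noteq> d u}" using finV by (intro card_mono) auto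
            then show ?thesis using ab by simp
          qed
          have "(\<Sum>u\<in>V. card {v\<in>V. d v \<noteq> d u}) = (\<Sum>u\<in>V-{a0,b0}. card {v\<in>V. d v \<noteq> d u}) + (\<Sum>u\<in>{a0,b0}. card {v\<in>V. d v \<noteq> d u})"
            using sum.subset_diff[of "{a0,b0}" V "\<lambda>u. card {v\<in>V. d v \<noteq> d u}"] a0 b0 finV by simp
          also have "(\<Sum>u\<in>{a0,b0}. card {v\<in>V. d v \<noteq> d u}) = 2 * (card V - 1)" using ab Qa Qb by simp
          finally have s1: "(\<Sum>u\<in>V. card {v\<in>V. d v \<noteq> d u}) = (\<Sum>u\<in>V-{a0,b0}. card {v\<in>V. d v \<noteq> d u}) + 2 * (card V - 1)" .
          have "(\<Sum>u\<in>V-{a0,b0}. 2) \<le> (\<Sum>u\<in>V-{a0,b0}. card {v\<in>V. d v \<noteq> d u})"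
            using Qc by (rule sum_mono)
          moreover have "card (V - {a0,b0}) = card V - 2" using a0 b0 ab finV by (simp add: card_Diff_subset)
          ultimately have "2 * (card V - 2) + 2 * (card V - 1) \<le> (\<Sum>u\<in>V. card {v\<in>V. d v \<noteq> d u})"
            using s1 by simp
          then have "real (2 * (card V - 2) + 2 * (card V - 1)) \<le> D" using DQ by linarith
          moreover have "real (2 * (card V - 2) + 2 * (card V - 1)) = 4 * real (card V) - 6" using n by (simp add: of_nat_diff)
          ultimately have False using Dlt by (rule lin2)
          then show ?thesis ..
        qed
      qed
      then obtain c where cV: "c \<in> V" and
        cc: "(d c = dl \<and> (\<forall>v\<in>V-{c}. d v = dh)) \<or> (d c = dh \<and> (\<forall>v\<in>V-{c}. d v = dl))" by blast
      have Dc: "D = 2 * (real (card V) - 1) * (real dh - real dl)"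
      proof -
        have "D = 2 * (real (card V) - 1) * \<bar>real (d c) - real (if d c = dl then dh else dl)\<bar>"
          unfolding D_def R_def using cc dlh by (intro config_D[OF finV cV]) auto
        then show ?thesis using cc dlh by auto
      qed
      have t1: "dh = dl + 1"
      proof (rule ccontr)
        assume "dh \<noteq> dl + 1"
        then have "real dh - real dl \<ge> 2" using dlh by linarith
        then have "2 * (real (card V) - 1) * (real dh - real dl) \<ge> 2 * (real (card V) - 1) * 2"
          using npos by (intro mult_left_mono) auto
        then show False using Dc Dlt2 by (simp add: algebra_simps)
      qed
      have DD: "D = 2 * real (card V) - 2" using Dc t1 by (simp add: algebra_simps)
      have n4: "real (card V) > 3" using DD Dlt2 by linarith
      have mm: "max_degree V E - min_degree V E \<le> 1" using t1 unfolding dl_def dh_def by simp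
      have weq: "real (weight V (mG E)) = (real (card V) - 2) * real (card E) - (real (card V) - 1) / 2"
        using wmG DD by simp
      have ceq: "int (card E) = \<lceil>real (weight V (mG E)) / real (card V - 2)\<rceil>"
      proof -
        have "real (weight V (mG E)) / real (card V - 2) = ((real (card V) - 2) * real (card E) - (real (card V) - 1) / 2) / (real (card V) - 2)"
          using weq nr by simp
        also have "\<dots> = real (card E) - ((real (card V) - 1) / 2) / (real (card V) - 2)"
          using npos by (simp add: diff_divide_distrib)
        finally have "real (weight V (mG E)) / real (card V - 2) = real (card E) - ((real (card V) - 1) / 2) / (real (card V) - 2)" .
        moreover have "((real (card V) - 1) / 2) / (real (card V) - 2) < 1" using n4 npos by (simp add: field_simps)
        moreover have "((real (card V) - 1) / 2) / (real (card V) - 2) \<ge> 0" using n4 npos by simp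
        ultimately show ?thesis using ceil_aux[of "((real (card V) - 1) / 2) / (real (card V) - 2)" "card E"] by simp
      qed
      have req: "real (card E) = (real (weight V (mG E))
              + (if max_degree V E = min_degree V E then 0 else (real (card V) - 1) / 2))
              / real (card V - 2)"
        using weq npos nr dlh unfolding dl_def dh_def by (simp add: field_simps)
      have disj: "(card {v \<in> V. degree E v = min_degree V E} = 1 \<and> max_degree V E \<ge> 3 \<and> min_degree V E \<ge> 2)
            \<or> (card {v \<in> V. degree E v = max_degree V E} = 1 \<and> max_degree V E \<ge> 4 \<and> min_degree V E \<ge> 3)"
        using cc
      proof
        assume c1: "d c = dl \<and> (\<forall>v\<in>V-{c}. d v = dh)"
        have vc: "v = c" if "v \<in> V" "d v = dl" for v
        proof (rule ccontr)
          assume "v \<noteq> c"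
          then have "d v = dh" using c1 that by blast
          then show False using that dlh by simp
        qed
        have "{v \<in> V. d v = dl} = {c}"
        proof
          show "{v \<in> V. d v = dl} \<subseteq> {c}" using vc by blast
          show "{c} \<subseteq> {v \<in> V. d v = dl}" using c1 cV by simp
        qed
        then have card1: "card {v \<in> V. degree E v = min_degree V E} = 1" unfolding d_def dl_def by simp
        have "dh \<noteq> 1"
        proof
          assume h: "dh = 1"
          have "\<forall>v\<in>V. d v \<le> 1"
          proof
            fix v assume v: "v \<in> V"
            show "d v \<le> 1"
            proof (cases "v = c")
              case True
              then show ?thesis using c1 t1 h by simp
            next
              case False
              then show ?thesis using c1 t1 h v by simp
            qed
          qed
          then show False by (rule small)
        qed
        moreover have "dh \<noteq> 2"
        proof
          assume "dh = 2"
          then have "(\<Sum>u\<in>V. d u) = 1 + (card V - 1) * 2" using sumd[OF cV] c1 t1 by simp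
          moreover have "even (\<Sum>u\<in>V. d u)" using hs by simp
          ultimately show False by simp
        qed
        ultimately have "dh \<ge> 3" using t1 by simp
        then show ?thesis using card1 t1 unfolding dl_def dh_def by simp
      next
        assume c1: "d c = dh \<and> (\<forall>v\<in>V-{c}. d v = dl)"
        have vc: "v = c" if "v \<in> V" "d v = dh" for v
        proof (rule ccontr)
          assume "v \<noteq> c"
          then have "d v = dl" using c1 that by blast
          then show False using that dlh by simp
        qed
        have "{v \<in> V. d v = dh} = {c}"
        proof
          show "{v \<in> V. d v = dh} \<subseteq> {c}" using vc by blast
          show "{c} \<subseteq> {v \<in> V. d v = dh}" using c1 cV by simp
        qed
        then have card1: "card {v \<in> V. degree E v = max_degree V E} = 1" unfolding d_def dh_def by simp
        have "dl \<noteq> 0"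
        proof
          assume h: "dl = 0"
          have "\<forall>v\<in>V. d v \<le> 1"
          proof
            fix v assume v: "v \<in> V"
            show "d v \<le> 1"
            proof (cases "v = c")
              case True
              then show ?thesis using c1 t1 h by simp
            next
              case False
              then show ?thesis using c1 t1 h v by simp
            qed
          qed
          then show False by (rule small)
        qed
        moreover have "dl \<noteq> 2"
        proof
          assume "dl = 2"
          then have "(\<Sum>u\<in>V. d u) = 3 + (card V - 1) * 2" using sumd[OF cV] c1 t1 by simp
          moreover have "even (\<Sum>u\<in>V. d u)" using hs by simp
          ultimately show False by simp
        qed
        moreover have "dl \<noteq> 1"
        proof
          assume dl1: "dl = 1"
          have dc2: "d c = 2" using c1 t1 dl1 by simp
          have oth1: "d v = 1" if "v \<in> V" "v \<noteq> c" for v using c1 that dl1 by simp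
          define I where "I x = (if x \<in> nbr E c then 1 else 0::real)" for x
          have Hc: "y = c" if "y \<in> V" "y \<in> H" for y
          proof (rule ccontr)
            assume "y \<noteq> c"
            then have "d y = 1" using oth1 that by simp
            then show False using that by (simp add: H_def d_def)
          qed
          have cb: "card (nbr E x \<inter> H - {z}) \<le> (if x \<in> nbr E c then 1 else 0)" for x z
          proof -
            have sub: "nbr E x \<inter> H - {z} \<subseteq> {y. y = c \<and> x \<in> nbr E c}"
            proof
              fix y assume y: "y \<in> nbr E x \<inter> H - {z}"
              then have "y \<in> V" using nbr_sub[OF G] by blast
              then have "y = c" using y Hc by blast
              moreover have "x \<in> nbr E c" using y \<open>y = c\<close> nbr_sym[of c E x] by simp
              ultimately show "y \<in> {y. y = c \<and> x \<in> nbr E c}" by simp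
            qed
            show ?thesis
            proof (cases "x \<in> nbr E c")
              case True
              then have "nbr E x \<inter> H - {z} \<subseteq> {c}" using sub by auto
              then have "card (nbr E x \<inter> H - {z}) \<le> card {c}" by (intro card_mono) auto
              then show ?thesis using True by simp
            next
              case False
              then have "nbr E x \<inter> H - {z} = {}" using sub by auto
              then have "card (nbr E x \<inter> H - {z}) = 0" by (simp only: card.empty)
              then show ?thesis using False by (simp only: if_False le_refl)
            qed
          qed
          have fI: "real (f {u,v}) \<le> I u * I v" if "u \<in> V" "v \<in> V" "u \<noteq> v" for u v
          proof -
            have "f {u,v} \<le> (if u \<in> nbr E c then 1 else 0)" "f {u,v} \<le> (if v \<in> nbr E c then 1 else 0)"
              using fb[OF that] cb[of u v] cb[of v u] by auto
            then show ?thesis unfolding I_def by (auto split: if_splits)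
          qed
          have I0: "0 \<le> I x" for x by (simp add: I_def)
          have sI: "(\<Sum>u\<in>V. I u) = 2"
          proof -
            have "(\<Sum>u\<in>V. I u) = (\<Sum>u\<in>{u\<in>V. u \<in> nbr E c}. 1)" unfolding I_def
              by (rule sum.inter_filter[OF finV, symmetric])
            also have "{u\<in>V. u \<in> nbr E c} = nbr E c" using nbr_sub[OF G] by blast
            finally show ?thesis using dc2 dn by simp
          qed
          have "2 * real (weight V f) \<le> (\<Sum>u\<in>V. \<Sum>v\<in>V-{u}. I u * I v)"
            unfolding wconv using fI by (intro sum_mono) auto
          also have "\<dots> \<le> (\<Sum>u\<in>V. \<Sum>v\<in>V. I u * I v)"
            using finV I0 by (intro sum_mono sum_mono2) (auto intro: mult_nonneg_nonneg)
          also have "\<dots> = (\<Sum>u\<in>V. I u) * (\<Sum>v\<in>V. I v)" by (simp add: sum_product)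
          finally have wf2: "real (weight V f) \<le> 2" using sI by simp
          have "\<forall>v\<in>V-{c}. d v = 1" using c1 dl1 by simp
          from sumd[OF cV this] have "(\<Sum>u\<in>V. d u) = 2 + (card V - 1) * 1" using dc2 by simp
          then have "2 * card E = card V + 1" using hs n by simp
          moreover have V4: "card V \<ge> 4" using n4 by simp
          ultimately have "card E \<ge> 3" by presburger
          then have "real (card E) \<ge> 3" by simp
          then have "real (card E) - 1 \<ge> 2" by simp
          moreover have "real (card V) - 2 \<ge> 2" using V4 by simp
          ultimately have "(real (card E) - 1) * (real (card V) - 2) \<ge> 2 * 2"
            by (intro mult_mono) auto
          then show False using lt wf2 by linarith
        qed
        ultimately have "dl \<ge> 3" by simp
        then show ?thesis using card1 t1 unfolding dl_def dh_def by simp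
      qed
      show ?thesis using mm disj ceq req by blast
    qed
  qed
  show ?thesis using partA partB by blast
qed

end
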